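(* Let $f,g:\mathbb{N}\to\mathbb{C}$ be functions, neither identically zero, such that \[ g(n)=\sum_{k=1}^{n}\binom{n-1}{k-1} f(k)\quad\text{for all } n\in\mathbb{N}. \] Then at least one of $\{n: f(n)\neq 0\}$ and $\{n: g(n)\neq 0\}$ is infinite. *)

theory Defs
  imports Complex_Main
begin

end

theory Submission
  imports Defs
begin

definition T :: "(nat \<Rightarrow> complex) \<Rightarrow> nat \<Rightarrow> complex" where
  "T a m = (\<Sum>j\<le>m. of_nat (m choose j) * a j)"

lemma T_diff: "T a (Suc m) - T a m = T (\<lambda>j. a (Suc j)) m"
proof -
  have "T a (Suc m) = a 0 + (\<Sum>j\<le>m. of_nat (Suc m choose Suc j) * a (Suc j))"
    unfolding T_def by (subst sum.atMost_Suc_shift) simp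
  also have "\<dots> = a 0 + (\<Sum>j\<le>m. of_nat (m choose j) * a (Suc j))
       + (\<Sum>j\<le>m. of_nat (m choose Suc j) * a (Suc j))"
    by (simp add: sum.distrib distrib_right)
  moreover have "a 0 + (\<Sum>j\<le>m. of_nat (m choose Suc j) * a (Suc j)) = T a m"
  proof -
    have "(\<Sum>j\<le>Suc m. of_nat (m choose j) * a j) = T a m" unfolding T_def by simp
    moreover have "(\<Sum>j\<le>Suc m. of_nat (m choose j) * a j) = a 0 + (\<Sum>j\<le>m. of_nat (m choose Suc j) * a (Suc j))"
      by (subst sum.atMost_Suc_shift) simp
    ultimately show ?thesis by simp
  qed
  ultimately show ?thesis unfolding T_def by (simp add: algebra_simps)
qed

lemma T_const: assumes "\<forall>j>0. a j = 0" shows "T a m = a 0"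
  unfolding T_def using assms by (subst sum.atMost_shift) simp

lemma main: "(\<forall>j>N. a j = 0) \<Longrightarrow> a N \<noteq> 0 \<Longrightarrow> \<not>(\<exists>M. \<forall>m\<ge>M. T a m = 0)"
proof (induction N arbitrary: a)
  case 0
  then show ?case using T_const[of a] by auto
next
  case (Suc N)
  have "\<not>(\<exists>M. \<forall>m\<ge>M. T (\<lambda>j. a (Suc j)) m = 0)"
    using Suc.IH[of "\<lambda>j. a (Suc j)"] Suc.prems by auto
  then show ?case using T_diff[of a]
    by (metis diff_self le_Suc_eq)
qed

theorem proposition5p1:
  fixes f g :: "nat \<Rightarrow> complex"
  assumes f_nz: "\<exists>n\<ge>1. f n \<noteq> 0"
    and g_nz: "\<exists>n\<ge>1. g n \<noteq> 0"
    and rel: "\<And>n. n \<ge> 1 \<Longrightarrow> g n = (\<Sum>k=1..n. of_nat ((n - 1) choose (k - 1)) * f k)"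
  shows "infinite {n. n \<ge> 1 \<and> f n \<noteq> 0} \<or> infinite {n. n \<ge> 1 \<and> g n \<noteq> 0}"
proof (rule ccontr)
  assume "\<not> ?thesis"
  hence Ff: "finite {n. n \<ge> 1 \<and> f n \<noteq> 0}" and Fg: "finite {n. n \<ge> 1 \<and> g n \<noteq> 0}" by auto
  define a where "a j = f (Suc j)" for j
  have gT: "g (Suc m) = T a m" for m
  proof -
    have "g (Suc m) = (\<Sum>k=Suc 0..Suc m. of_nat (m choose (k - 1)) * f k)" using rel[of "Suc m"] by simp
    also have "\<dots> = (\<Sum>j=0..m. of_nat (m choose j) * f (Suc j))"
      by (subst sum.shift_bounds_cl_Suc_ivl) simp
    finally show ?thesis unfolding T_def a_def by (simp add: atLeast0AtMost)
  qed
  define S where "S = {n. n \<ge> 1 \<and> f n \<noteq> 0}"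
  have Sne: "S \<noteq> {}" using f_nz S_def by auto
  define N where "N = Max S - 1"
  have "Max S \<in> S" using Ff Sne S_def Max_in by auto
  hence aN: "a N \<noteq> 0" unfolding N_def a_def S_def by auto
  have az: "\<forall>j>N. a j = 0"
  proof (intro allI impI)
    fix j assume "j > N"
    show "a j = 0"
    proof (rule ccontr)
      assume "a j \<noteq> 0"
      hence "Suc j \<in> S" unfolding S_def a_def by auto
      hence "Suc j \<le> Max S" using Ff S_def by auto
      thus False using \<open>j > N\<close> N_def by auto
    qed
  qed
  define G where "G = {n. n \<ge> 1 \<and> g n \<noteq> 0}"
  have "\<forall>m\<ge>Max G. T a m = 0"
  proof (intro allI impI)
    fix m assume "m \<ge> Max G"
    show "T a m = 0"
    proof (rule ccontr)
      assume "T a m \<noteq> 0"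
      hence "Suc m \<in> G" unfolding G_def using gT by auto
      hence "Suc m \<le> Max G" using Fg G_def by auto
      thus False using \<open>m \<ge> Max G\<close> by auto
    qed
  qed
  thus False using main[OF az aN] by blast
qed

end
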